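(* Let $\mathbf P=(P,\leq,{}',0,1)$ be an orthogonal lub-complete poset. Then the following conditions are equivalent: (i) $\mathbf P$ is an orthocomplemented poset. (ii) For all $x,y\in P$, $x\leq y$ implies $x\rightarrow_C y=1$.
   Context: $(P,\leq,{}',0,1)$ is a bounded poset with an antitone involution ${}'$ ($x\leq y\Rightarrow y'\leq x'$, $x''=x$). It is orthogonal if $x\leq y'$ implies that the supremum $x\vee y$ exists. It is lub-complete if for every lower bound $x$ of a finite subset $M$ of $P$ there is a maximal lower bound of $M$ above $x$. It is orthocomplemented if $x\vee x'=1$ for every $x\in P$. For $A\subseteq P$, $U(A)$ is the set of upper bounds of $A$, $U(x,y)=U(\{x,y\})$, and $\mathrm{Min}\,A$ is the set of minimal elements of $A$. The classical implication is $x\rightarrow_C y:=\mathrm{Min}\,U(x',y)\subseteq P$; $x\rightarrow_C y=1$ means $x\rightarrow_C y=\{1\}$. *)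

theory Defs
  imports Main
begin

definition bounded_inv_poset :: "('a::order \<Rightarrow> 'a) \<Rightarrow> 'a \<Rightarrow> 'a \<Rightarrow> bool" where
  "bounded_inv_poset c z t \<longleftrightarrow>
     (\<forall>x. z \<le> x \<and> x \<le> t) \<and>
     (\<forall>x y. x \<le> y \<longrightarrow> c y \<le> c x) \<and>
     (\<forall>x. c (c x) = x)"

definition UB :: "'a::order set \<Rightarrow> 'a set" where
  "UB A = {u. \<forall>a\<in>A. a \<le> u}"

definition LB :: "'a::order set \<Rightarrow> 'a set" where
  "LB A = {l. \<forall>a\<in>A. l \<le> a}"

definition MinSet :: "'a::order set \<Rightarrow> 'a set" where
  "MinSet A = {m\<in>A. \<forall>a\<in>A. a \<le> m \<longrightarrow> a = m}"

definition MaxSet :: "'a::order set \<Rightarrow> 'a set" where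
  "MaxSet A = {m\<in>A. \<forall>a\<in>A. m \<le> a \<longrightarrow> a = m}"

definition is_sup2 :: "'a::order \<Rightarrow> 'a \<Rightarrow> 'a \<Rightarrow> bool" where
  "is_sup2 x y s \<longleftrightarrow> s \<in> UB {x, y} \<and> (\<forall>u\<in>UB {x, y}. s \<le> u)"

definition orthogonal :: "('a::order \<Rightarrow> 'a) \<Rightarrow> bool" where
  "orthogonal c \<longleftrightarrow> (\<forall>x y. x \<le> c y \<longrightarrow> (\<exists>s. is_sup2 x y s))"

definition lub_complete :: "'a::order itself \<Rightarrow> bool" where
  "lub_complete _ \<longleftrightarrow>
     (\<forall>(M::'a set) x. finite M \<longrightarrow> x \<in> LB M \<longrightarrow> (\<exists>m\<in>MaxSet (LB M). x \<le> m))"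

definition orthocomplemented :: "('a::order \<Rightarrow> 'a) \<Rightarrow> 'a \<Rightarrow> bool" where
  "orthocomplemented c t \<longleftrightarrow> (\<forall>x. is_sup2 x (c x) t)"

definition implC :: "('a::order \<Rightarrow> 'a) \<Rightarrow> 'a \<Rightarrow> 'a \<Rightarrow> 'a set" where
  "implC c x y = MinSet (UB {c x, y})"

end

theory Submission
  imports Defs
begin

theorem theorem1:
  fixes c :: "'a::order \<Rightarrow> 'a" and z t :: 'a
  assumes "bounded_inv_poset c z t"
    and "orthogonal c"
    and "lub_complete TYPE('a)"
  shows "orthocomplemented c t \<longleftrightarrow> (\<forall>x y. x \<le> y \<longrightarrow> implC c x y = {t})"
proof -
  have UB2: "\<And>a b u. u \<in> UB {a, b} \<longleftrightarrow> a \<le> u \<and> b \<le> u" unfolding UB_def by auto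
  have LB2: "\<And>a b u. u \<in> LB {a, b} \<longleftrightarrow> u \<le> a \<and> u \<le> b" unfolding LB_def by auto
  have top: "\<And>x. x \<le> t" and anti: "\<And>x y. x \<le> y \<Longrightarrow> c y \<le> c x"
    and inv: "\<And>x. c (c x) = x"
    using assms(1) unfolding bounded_inv_poset_def by auto
  show ?thesis
  proof
    assume oc: "orthocomplemented c t"
    show "\<forall>x y. x \<le> y \<longrightarrow> implC c x y = {t}"
    proof (intro allI impI)
      fix x y :: 'a assume xy: "x \<le> y"
      have "UB {c x, y} = {t}"
      proof
        show "UB {c x, y} \<subseteq> {t}"
        proof
          fix u assume u: "u \<in> UB {c x, y}"
          hence "u \<in> UB {x, c x}" using xy unfolding UB_def by (auto intro: order_trans)
          hence "t \<le> u" using oc unfolding orthocomplemented_def is_sup2_def by blast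
          thus "u \<in> {t}" using top[of u] by auto
        qed
        show "{t} \<subseteq> UB {c x, y}" using top unfolding UB_def by auto
      qed
      thus "implC c x y = {t}" unfolding implC_def MinSet_def by auto
    qed
  next
    assume H: "\<forall>x y. x \<le> y \<longrightarrow> implC c x y = {t}"
    show "orthocomplemented c t" unfolding orthocomplemented_def is_sup2_def
    proof (intro allI conjI ballI)
      fix x
      show "t \<in> UB {x, c x}" using top unfolding UB_def by auto
      fix u assume u: "u \<in> UB {x, c x}"
      have "c u \<in> LB {x, c x}" using u anti[of x u] anti[of "c x" u] inv unfolding UB2 LB2 by simp
      then obtain m where m: "m \<in> MaxSet (LB {x, c x})" "c u \<le> m"
        using assms(3) unfolding lub_complete_def by (meson finite.emptyI finite.insertI)
      have mu: "c m \<le> u" using anti[OF m(2)] inv by simp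
      have "c m \<in> MinSet (UB {c x, x})"
        unfolding MinSet_def
      proof (intro CollectI conjI ballI impI)
        show "c m \<in> UB {c x, x}" using m(1) anti[of m x] anti[of m "c x"] inv unfolding MaxSet_def LB2 UB2 by simp
        fix a assume a: "a \<in> UB {c x, x}" "a \<le> c m"
        have "c a \<in> LB {x, c x}" using a(1) anti[of x a] anti[of "c x" a] inv unfolding UB2 LB2 by simp
        moreover have "m \<le> c a" using anti[OF a(2)] inv by simp
        ultimately have "c a = m" using m(1) unfolding MaxSet_def by blast
        thus "a = c m" using inv by metis
      qed
      hence "c m = t" using H unfolding implC_def by auto
      thus "t \<le> u" using mu by simp
    qed
  qed
qed

end
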